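(* Let $(M,F)$ be a conic pseudo-Finsler surface satisfying the $T$-condition, and $\overline F=e^\phi F$ an anisotropic conformal change. (a) If $\phi_{;2}$ depends only on $x$, then $\overline F$ satisfies the $T$-condition. (b) If $\sigma=(\phi_{;2})^2$ (equivalently $\rho=\varepsilon$), then $\overline F$ satisfies the $T$-condition if and only if $\phi_{;2;2}=0$.
   Context: Throughout, $M$ is a smooth $2$-dimensional manifold, $TM_0$ its slit tangent bundle with induced local coordinates $(x^i,y^i)$, $\partial_i=\partial/\partial x^i$, $\dot\partial_i=\partial/\partial y^i$. A function is called $h(r)$ if it is positively homogeneous of degree $r$ in $y$. A conic pseudo-Finsler surface $(M,F)$ consists of a conic subbundle $\mathcal A\subset TM_0$ (an open set invariant under $y\mapsto\lambda y$, $\lambda>0$, projecting onto $M$) and a smooth $h(1)$ function $F:\mathcal A\to\mathbb R$ such that $g_{ij}=\frac12\dot\partial_i\dot\partial_jF^2$ is nondegenerate. Put $\ell_i=\dot\partial_iF$, $\ell^i=y^i/F$. Modified Berwald frame: $\varepsilon\in\{1,-1\}$ and a covector $m_i$ satisfy $g_{ij}=\ell_i\ell_j+\varepsilon m_im_j$, $m^i=g^{ij}m_j$, so $\ell^i\ell_i=1$, $\ell^im_i=0$, $m^im_i=\varepsilon$. The main scalar $\mathcal I$ ($h(0)$) is defined by $FC_{ijk}=\mathcal I\,m_im_jm_k$, where $C_{ijk}=\frac14\dot\partial_i\dot\partial_j\dot\partial_kF^2$. For a smooth function $f$: $f_{;1}=y^i\dot\partial_if$, $f_{;2}=\varepsilon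 Fm^i\dot\partial_if$; iterated derivatives are read left to right, e.g. $f_{;2;2}=(f_{;2})_{;2}$. $F$ satisfies the $T$-condition if $\mathcal I_{;2}=0$ (equivalently $\mathcal I$ depends only on $x$). Anisotropic conformal change: $\phi$ is a smooth $h(0)$ function on $\mathcal A$ with $F^2(\dot\partial_i\dot\partial_j\phi+\dot\partial_i\phi\,\dot\partial_j\phi)m^im^j+\varepsilon\ne0$, and $\overline F=e^{\phi}F$. Set $\sigma=\phi_{;2;2}+\varepsilon\mathcal I\phi_{;2}+2(\phi_{;2})^2$, $\rho=1/(\sigma+\varepsilon-(\phi_{;2})^2)$ (with $\varepsilon\rho>0$). The main scalar of $\overline F$ is $\overline{\mathcal I}=\sqrt{\varepsilon\rho}[\mathcal I+2\varepsilon\phi_{;2}-\frac\varepsilon2(\ln\rho)_{;2}]$. $\overline F$ satisfies the $T$-condition iff $\overline{\mathcal I}$ depends only on $x$ (i.e. $\overline{\mathcal I}_{;2}=0$, the derivative taken with respect to $F$). *)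

theory Defs
  imports "HOL-Analysis.Analysis"
begin

text \<open>Local-coordinate setting.  A point of the slit tangent bundle over a chart
  is a pair (x,y) of vectors in R^2.  All notions below are local.\<close>

type_synonym pt = "(real^2) \<times> (real^2)"

fun Ck_on :: "nat \<Rightarrow> pt set \<Rightarrow> (pt \<Rightarrow> real) \<Rightarrow> bool" where
  "Ck_on 0 S f = continuous_on S f"
| "Ck_on (Suc n) S f = (f differentiable_on S \<and>
      (\<forall>v. Ck_on n S (\<lambda>p. frechet_derivative f (at p) v)))"

definition smooth_on :: "pt set \<Rightarrow> (pt \<Rightarrow> real) \<Rightarrow> bool" where
  "smooth_on S f = (\<forall>n. Ck_on n S f)"

definition vd :: "(pt \<Rightarrow> real) \<Rightarrow> pt \<Rightarrow> real^2 \<Rightarrow> real" where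
  "vd f p v = frechet_derivative f (at p) (0, v)"

definition hom_deg :: "pt set \<Rightarrow> real \<Rightarrow> (pt \<Rightarrow> real) \<Rightarrow> bool" where
  "hom_deg A r f = (\<forall>x y. (x, y) \<in> A \<longrightarrow>
      (\<forall>t::real. t > 0 \<longrightarrow> f (x, t *\<^sub>R y) = t powr r * f (x, y)))"

definition conic_subbundle :: "(real^2) set \<Rightarrow> pt set \<Rightarrow> bool" where
  "conic_subbundle U A = (open U \<and> open A \<and> A \<subseteq> U \<times> (UNIV - {0}) \<and>
      (\<forall>x y. (x, y) \<in> A \<longrightarrow> (\<forall>t::real. t > 0 \<longrightarrow> (x, t *\<^sub>R y) \<in> A)) \<and>
      (\<forall>x\<in>U. \<exists>y. (x, y) \<in> A))"

definition gF :: "(pt \<Rightarrow> real) \<Rightarrow> pt \<Rightarrow> real^2 \<Rightarrow> real^2 \<Rightarrow> real" where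
  "gF F p u v = 1/2 * vd (\<lambda>q. vd (\<lambda>r. (F r)\<^sup>2) q u) p v"

definition CF :: "(pt \<Rightarrow> real) \<Rightarrow> pt \<Rightarrow> real^2 \<Rightarrow> real^2 \<Rightarrow> real^2 \<Rightarrow> real" where
  "CF F p u v w = 1/4 * vd (\<lambda>q. vd (\<lambda>r. vd (\<lambda>s. (F s)\<^sup>2) r u) q v) p w"

definition pseudo_finsler :: "(real^2) set \<Rightarrow> pt set \<Rightarrow> (pt \<Rightarrow> real) \<Rightarrow> bool" where
  "pseudo_finsler U A F = (conic_subbundle U A \<and> smooth_on A F \<and> hom_deg A 1 F \<and>
      (\<forall>p\<in>A. \<forall>u. (\<forall>v. gF F p u v = 0) \<longrightarrow> u = 0))"

text \<open>Modified Berwald frame: the covector m_i is represented by the vector m p,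
  acting by the inner product; g_ij = l_i l_j + eps m_i m_j.\<close>
definition berwald_frame :: "pt set \<Rightarrow> (pt \<Rightarrow> real) \<Rightarrow> real \<Rightarrow> (pt \<Rightarrow> real^2) \<Rightarrow> bool" where
  "berwald_frame A F eps m = (eps \<in> {1, -1} \<and> (\<forall>u. smooth_on A (\<lambda>p. m p \<bullet> u)) \<and>
      (\<forall>p\<in>A. \<forall>u v. gF F p u v = vd F p u * vd F p v + eps * (m p \<bullet> u) * (m p \<bullet> v)))"

definition mup :: "(pt \<Rightarrow> real) \<Rightarrow> (pt \<Rightarrow> real^2) \<Rightarrow> pt \<Rightarrow> real^2" where
  "mup F m p = (THE w. \<forall>v. gF F p w v = m p \<bullet> v)"

definition main_scalar :: "(pt \<Rightarrow> real) \<Rightarrow> (pt \<Rightarrow> real^2) \<Rightarrow> pt \<Rightarrow> real" where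
  "main_scalar F m p = (THE c. \<forall>u v w.
      F p * CF F p u v w = c * (m p \<bullet> u) * (m p \<bullet> v) * (m p \<bullet> w))"

definition d2 :: "(pt \<Rightarrow> real) \<Rightarrow> real \<Rightarrow> (pt \<Rightarrow> real^2) \<Rightarrow> (pt \<Rightarrow> real) \<Rightarrow> pt \<Rightarrow> real" where
  "d2 F eps m f p = eps * F p * vd f p (mup F m p)"

definition T_condition :: "pt set \<Rightarrow> (pt \<Rightarrow> real) \<Rightarrow> real \<Rightarrow> (pt \<Rightarrow> real^2) \<Rightarrow> bool" where
  "T_condition A F eps m = (\<forall>p\<in>A. d2 F eps m (main_scalar F m) p = 0)"

definition sigma_cc :: "(pt \<Rightarrow> real) \<Rightarrow> real \<Rightarrow> (pt \<Rightarrow> real^2) \<Rightarrow> (pt \<Rightarrow> real) \<Rightarrow> pt \<Rightarrow> real" where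
  "sigma_cc F eps m \<phi> p = d2 F eps m (d2 F eps m \<phi>) p
      + eps * main_scalar F m p * d2 F eps m \<phi> p + 2 * (d2 F eps m \<phi> p)\<^sup>2"

definition rho_cc :: "(pt \<Rightarrow> real) \<Rightarrow> real \<Rightarrow> (pt \<Rightarrow> real^2) \<Rightarrow> (pt \<Rightarrow> real) \<Rightarrow> pt \<Rightarrow> real" where
  "rho_cc F eps m \<phi> p = 1 / (sigma_cc F eps m \<phi> p + eps - (d2 F eps m \<phi> p)\<^sup>2)"

definition conformal_change :: "pt set \<Rightarrow> (pt \<Rightarrow> real) \<Rightarrow> real \<Rightarrow> (pt \<Rightarrow> real^2) \<Rightarrow> (pt \<Rightarrow> real) \<Rightarrow> bool" where
  "conformal_change A F eps m \<phi> = (smooth_on A \<phi> \<and> hom_deg A 0 \<phi> \<and>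
      (\<forall>p\<in>A. (F p)\<^sup>2 * (vd (\<lambda>q. vd \<phi> q (mup F m p)) p (mup F m p)
                 + (vd \<phi> p (mup F m p))\<^sup>2) + eps \<noteq> 0) \<and>
      (\<forall>p\<in>A. eps * rho_cc F eps m \<phi> p > 0))"

text \<open>Main scalar of e^phi F (formula from the context); (ln rho) is written
  ln (eps rho) = ln |rho|, which has the same derivative.\<close>
definition main_scalar_cc :: "(pt \<Rightarrow> real) \<Rightarrow> real \<Rightarrow> (pt \<Rightarrow> real^2) \<Rightarrow> (pt \<Rightarrow> real) \<Rightarrow> pt \<Rightarrow> real" where
  "main_scalar_cc F eps m \<phi> p = sqrt (eps * rho_cc F eps m \<phi> p) *
      (main_scalar F m p + 2 * eps * d2 F eps m \<phi> p
       - eps / 2 * d2 F eps m (\<lambda>q. ln (eps * rho_cc F eps m \<phi> q)) p)"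

text \<open>e^phi F satisfies the T-condition iff its main scalar has vanishing ;2-derivative
  (taken with respect to F).\<close>
definition T_condition_cc :: "pt set \<Rightarrow> (pt \<Rightarrow> real) \<Rightarrow> real \<Rightarrow> (pt \<Rightarrow> real^2) \<Rightarrow> (pt \<Rightarrow> real) \<Rightarrow> bool" where
  "T_condition_cc A F eps m \<phi> = (\<forall>p\<in>A. d2 F eps m (main_scalar_cc F eps m \<phi>) p = 0)"

end

theory Submission
  imports Defs
begin



lemma fd_works: "f differentiable (at p) \<Longrightarrow> (f has_derivative frechet_derivative f (at p)) (at p)"
  using frechet_derivative_works by blast

lemma fd_blin: "f differentiable (at p) \<Longrightarrow> bounded_linear (frechet_derivative f (at p))"
  using fd_works has_derivative_bounded_linear by blast

lemma fd_lin2: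
  assumes "f differentiable (at p)"
  shows "frechet_derivative f (at p) (a *\<^sub>R u + b *\<^sub>R v) =
     a * frechet_derivative f (at p) u + b * frechet_derivative f (at p) v"
proof -
  interpret bounded_linear "frechet_derivative f (at p)" using fd_blin[OF assms] .
  show ?thesis by (simp add: add scaleR)
qed

lemma vd_lin:
  assumes "f differentiable (at p)"
  shows "vd f p (a *\<^sub>R u + b *\<^sub>R v) = a * vd f p u + b * vd f p v"
proof -
  have "((0::real^2), a *\<^sub>R u + b *\<^sub>R v) = a *\<^sub>R (0, u) + b *\<^sub>R (0, v)" by simp
  then show ?thesis unfolding vd_def using fd_lin2[OF assms] by metis
qed

lemma vec2_decomp: "(v::real^2) = (v$1) *\<^sub>R axis 1 1 + (v$2) *\<^sub>R axis 2 1"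
  by (simp add: vec_eq_iff forall_2 axis_def)

lemma vd_coord:
  assumes "f differentiable (at p)"
  shows "vd f p v = v$1 * vd f p (axis 1 1) + v$2 * vd f p (axis 2 1)"
proof -
  have e: "vd f p v = vd f p ((v$1) *\<^sub>R axis 1 1 + (v$2) *\<^sub>R axis 2 1)"
    using vec2_decomp[of v] by (rule arg_cong)
  show ?thesis by (simp only: e vd_lin[OF assms])
qed

lemma fd_local:
  assumes "open S" "p \<in> S" "f differentiable (at p)" "\<And>q. q \<in> S \<Longrightarrow> g q = f q"
  shows "g differentiable (at p) \<and> frechet_derivative g (at p) = frechet_derivative f (at p)"
proof -
  have "(g has_derivative frechet_derivative f (at p)) (at p)"
    by (rule has_derivative_transform_within_open[OF fd_works[OF assms(3)] assms(1,2)]) (simp add: assms(4))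
  note D = this
  show ?thesis using differentiableI[OF D] frechet_derivative_at[OF D] by simp
qed

lemma fd_lc:
  fixes f1 f2 g :: "pt \<Rightarrow> real"
  assumes "open S" "p \<in> S" "f1 differentiable (at p)" "f2 differentiable (at p)"
    "\<And>q. q \<in> S \<Longrightarrow> g q = a * f1 q + b * f2 q"
  shows "g differentiable (at p) \<and> frechet_derivative g (at p) d =
     a * frechet_derivative f1 (at p) d + b * frechet_derivative f2 (at p) d"
proof -
  have "((\<lambda>q. a * f1 q + b * f2 q) has_derivative
      (\<lambda>d. a * frechet_derivative f1 (at p) d + b * frechet_derivative f2 (at p) d)) (at p)"
    by (intro has_derivative_add has_derivative_mult_right fd_works assms)
  then have "(g has_derivative
      (\<lambda>d. a * frechet_derivative f1 (at p) d + b * frechet_derivative f2 (at p) d)) (at p)"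
    by (rule has_derivative_transform_within_open[OF _ assms(1,2)]) (simp add: assms(5))
  note D = this
  show ?thesis using differentiableI[OF D] frechet_derivative_at[OF D, symmetric] by simp
qed

lemma diff_at_open: "open S \<Longrightarrow> f differentiable_on S \<Longrightarrow> p \<in> S \<Longrightarrow> f differentiable (at p)"
  unfolding differentiable_on_def by (metis at_within_open)

lemma Ck_SucD:
  assumes "Ck_on (Suc n) S f"
  shows "f differentiable_on S" "Ck_on n S (\<lambda>p. frechet_derivative f (at p) v)"
  using assms[unfolded Ck_on.simps] by blast+

lemma Ck_SucI:
  "f differentiable_on S \<Longrightarrow> (\<And>v. Ck_on n S (\<lambda>p. frechet_derivative f (at p) v)) \<Longrightarrow> Ck_on (Suc n) S f"
  unfolding Ck_on.simps by blast

lemma Ck_Suc_mono: "Ck_on (Suc n) S f \<Longrightarrow> Ck_on n S f"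
proof (induction n arbitrary: f)
  case 0 then show ?case by (simp add: differentiable_imp_continuous_on)
next
  case (Suc n)
  have "f differentiable_on S" by (rule Ck_SucD(1)[OF Suc.prems])
  moreover have "Ck_on n S (\<lambda>p. frechet_derivative f (at p) v)" for v
    using Suc.IH Ck_SucD(2)[OF Suc.prems] by blast
  ultimately show ?case by (rule Ck_SucI)
qed

lemma Ck_cong:
  assumes "open S" shows "Ck_on n S f \<Longrightarrow> (\<And>x. x \<in> S \<Longrightarrow> f x = g x) \<Longrightarrow> Ck_on n S g"
proof (induction n arbitrary: f g)
  case 0 then show ?case using continuous_on_cong by auto
next
  case (Suc n)
  have d: "f differentiable_on S" using Ck_SucD Suc.prems by blast
  have fdeq: "frechet_derivative f (at x) = frechet_derivative g (at x)" if "x \<in> S" for x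
    using fd_local[OF assms that diff_at_open[OF assms d that], of g] Suc.prems(2) that by auto
  have "g differentiable (at x)" if "x \<in> S" for x
    using fd_local[OF assms that diff_at_open[OF assms d that], of g] Suc.prems(2) that by auto
  then have "g differentiable_on S"
    by (simp add: differentiable_on_def differentiable_at_withinI)
  moreover have "Ck_on n S (\<lambda>p. frechet_derivative g (at p) v)" for v
    using Suc.IH[of "\<lambda>p. frechet_derivative f (at p) v" "\<lambda>p. frechet_derivative g (at p) v"]
      Ck_SucD(2)[OF Suc.prems(1)] fdeq by auto
  ultimately show ?case by (rule Ck_SucI)
qed

lemma Ck_add:
  assumes "open S" shows "Ck_on n S f \<Longrightarrow> Ck_on n S g \<Longrightarrow> Ck_on n S (\<lambda>x. f x + g x :: real)"
proof (induction n arbitrary: f g)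
  case 0 then show ?case by (simp add: continuous_on_add)
next
  case (Suc n)
  have df: "f differentiable_on S" and dg: "g differentiable_on S" using Suc.prems Ck_SucD by blast+
  have "(\<lambda>x. f x + g x) differentiable_on S" by (rule differentiable_on_add[OF df dg])
  moreover have "Ck_on n S (\<lambda>p. frechet_derivative (\<lambda>x. f x + g x) (at p) v)" for v
  proof -
    have "Ck_on n S (\<lambda>p. frechet_derivative f (at p) v + frechet_derivative g (at p) v)"
      by (rule Suc.IH[OF Ck_SucD(2)[OF Suc.prems(1)] Ck_SucD(2)[OF Suc.prems(2)]])
    moreover have "frechet_derivative f (at p) v + frechet_derivative g (at p) v =
       frechet_derivative (\<lambda>x. f x + g x) (at p) v" if "p \<in> S" for p
      using fd_lc[OF assms that diff_at_open[OF assms df that] diff_at_open[OF assms dg that],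
          of "\<lambda>x. f x + g x" 1 1] by simp
    ultimately show ?thesis
      using Ck_cong[OF assms, of n "\<lambda>p. frechet_derivative f (at p) v + frechet_derivative g (at p) v"
        "\<lambda>p. frechet_derivative (\<lambda>x. f x + g x) (at p) v"] by blast
  qed
  ultimately show ?case by (rule Ck_SucI)
qed

lemma Ck_mult:
  assumes "open S" shows "Ck_on n S f \<Longrightarrow> Ck_on n S g \<Longrightarrow> Ck_on n S (\<lambda>x. f x * g x :: real)"
proof (induction n arbitrary: f g)
  case 0 then show ?case unfolding Ck_on.simps by (rule continuous_on_mult)
next
  case (Suc n)
  have df: "f differentiable_on S" and dg: "g differentiable_on S" using Suc.prems Ck_SucD by blast+
  have "(\<lambda>x. f x * g x) differentiable_on S" by (rule differentiable_on_mult[OF df dg])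
  moreover have "Ck_on n S (\<lambda>p. frechet_derivative (\<lambda>x. f x * g x) (at p) v)" for v
  proof -
    have "Ck_on n S (\<lambda>p. f p * frechet_derivative g (at p) v + frechet_derivative f (at p) v * g p)"
      by (rule Ck_add[OF assms Suc.IH[OF Ck_Suc_mono[OF Suc.prems(1)] Ck_SucD(2)[OF Suc.prems(2)]]
          Suc.IH[OF Ck_SucD(2)[OF Suc.prems(1)] Ck_Suc_mono[OF Suc.prems(2)]]])
    moreover have "f p * frechet_derivative g (at p) v + frechet_derivative f (at p) v * g p =
       frechet_derivative (\<lambda>x. f x * g x) (at p) v" if "p \<in> S" for p
    proof -
      have "((\<lambda>x. f x * g x) has_derivative
        (\<lambda>v. f p * frechet_derivative g (at p) v + frechet_derivative f (at p) v * g p)) (at p)"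
        by (rule has_derivative_mult[OF fd_works[OF diff_at_open[OF assms df that]] fd_works[OF diff_at_open[OF assms dg that]]])
      then have "(\<lambda>v. f p * frechet_derivative g (at p) v + frechet_derivative f (at p) v * g p) = frechet_derivative (\<lambda>x. f x * g x) (at p)"
        by (rule frechet_derivative_at)
      from fun_cong[OF this, of v] show ?thesis by simp
    qed
    ultimately show ?thesis
      using Ck_cong[OF assms, of n "\<lambda>p. f p * frechet_derivative g (at p) v + frechet_derivative f (at p) v * g p"
        "\<lambda>p. frechet_derivative (\<lambda>x. f x * g x) (at p) v"] by blast
  qed
  ultimately show ?case by (rule Ck_SucI)
qed

lemma smooth_mult: "open S \<Longrightarrow> smooth_on S f \<Longrightarrow> smooth_on S g \<Longrightarrow> smooth_on S (\<lambda>x. f x * g x :: real)"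
  unfolding smooth_on_def using Ck_mult by blast

lemma smooth_fd: "smooth_on S f \<Longrightarrow> smooth_on S (\<lambda>p. frechet_derivative f (at p) v)"
  unfolding smooth_on_def using Ck_SucD(2) by blast

lemma smooth_vd: "smooth_on S f \<Longrightarrow> smooth_on S (\<lambda>p. vd f p u)"
  unfolding vd_def by (rule smooth_fd)

lemma smooth_diff: "open S \<Longrightarrow> smooth_on S f \<Longrightarrow> p \<in> S \<Longrightarrow> f differentiable (at p)"
  unfolding smooth_on_def using Ck_SucD(1) diff_at_open by blast

lemma smooth_cont: "smooth_on S f \<Longrightarrow> continuous_on S f"
  unfolding smooth_on_def using Ck_on.simps(1) by blast




definition conic :: "pt set \<Rightarrow> bool" where
  "conic A = (\<forall>x y. (x, y) \<in> A \<longrightarrow> (\<forall>t::real. t > 0 \<longrightarrow> (x, t *\<^sub>R y) \<in> A))"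

lemma fd_scale:
  assumes "f differentiable (at p)"
  shows "frechet_derivative f (at p) (c *\<^sub>R d) = c * frechet_derivative f (at p) d"
proof -
  interpret bounded_linear "frechet_derivative f (at p)" using fd_blin[OF assms] .
  show ?thesis by (simp add: scaleR)
qed

lemma euler:
  fixes f :: "pt \<Rightarrow> real"
  assumes "open A" "conic A" "hom_deg A r f" "(x, y) \<in> A" "f differentiable (at (x, y))"
  shows "vd f (x, y) y = r * f (x, y)"
proof -
  define \<gamma> where "\<gamma> = (\<lambda>t::real. (x, t *\<^sub>R y))"
  have g: "(\<gamma> has_derivative (\<lambda>s. (0, s *\<^sub>R y))) (at 1)"
    unfolding \<gamma>_def
    by (rule has_derivative_Pair[OF has_derivative_const has_derivative_scaleR_left[OF has_derivative_ident]])
  have "(f has_derivative frechet_derivative f (at (x, y))) (at (\<gamma> 1))"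
    using fd_works[OF assms(5)] by (simp add: \<gamma>_def)
  from diff_chain_at[OF g this]
  have d1: "((f \<circ> \<gamma>) has_derivative (frechet_derivative f (at (x, y)) \<circ> (\<lambda>s. (0, s *\<^sub>R y)))) (at 1)" .
  have "((\<lambda>z. z powr r) has_real_derivative r * 1 powr (r - 1)) (at 1)"
    by (rule has_real_derivative_powr) simp
  then have "((\<lambda>z. z powr r * f (x, y)) has_real_derivative r * f (x, y)) (at 1)"
    using DERIV_cmult_right by fastforce
  then have d2: "((\<lambda>z. z powr r * f (x, y)) has_derivative (\<lambda>s. r * f (x, y) * s)) (at 1)"
    by (rule has_field_derivative_imp_has_derivative)
  have "((f \<circ> \<gamma>) has_derivative (\<lambda>s. r * f (x, y) * s)) (at 1)"
  proof (rule has_derivative_transform_within_open[OF d2, of "{0<..}"])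
    fix t :: real assume "t \<in> {0<..}"
    then show "t powr r * f (x, y) = (f \<circ> \<gamma>) t"
      using assms(3,4) unfolding hom_deg_def \<gamma>_def by simp
  qed auto
  from has_derivative_unique[OF d1 this]
  have "(frechet_derivative f (at (x, y)) \<circ> (\<lambda>s. (0, s *\<^sub>R y))) 1 = r * f (x, y) * 1" by metis
  then show ?thesis by (simp add: vd_def)
qed

lemma hom_vd:
  fixes f :: "pt \<Rightarrow> real"
  assumes "open A" "conic A" "hom_deg A r f" "\<And>q. q \<in> A \<Longrightarrow> f differentiable (at q)"
  shows "hom_deg A (r - 1) (\<lambda>q. vd f q u)"
  unfolding hom_deg_def
proof (intro allI impI)
  fix x y and t :: real
  assume xy: "(x, y) \<in> A" and t: "t > 0"
  define S where "S = (\<lambda>q::pt. (fst q, t *\<^sub>R snd q))"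
  have dS: "(S has_derivative S) (at (x, y))"
    unfolding S_def
    by (rule has_derivative_Pair[OF has_derivative_fst[OF has_derivative_ident]
          has_derivative_scaleR_right[OF has_derivative_snd[OF has_derivative_ident]]])
  have txy: "(x, t *\<^sub>R y) \<in> A" using assms(2) xy t unfolding conic_def by blast
  have "(f has_derivative frechet_derivative f (at (x, t *\<^sub>R y))) (at (S (x, y)))"
    using fd_works[OF assms(4)[OF txy]] by (simp add: S_def)
  from diff_chain_at[OF dS this]
  have d1: "((f \<circ> S) has_derivative (frechet_derivative f (at (x, t *\<^sub>R y)) \<circ> S)) (at (x, y))" .
  have d2: "((\<lambda>q. t powr r * f q) has_derivative (\<lambda>h. t powr r * frechet_derivative f (at (x, y)) h)) (at (x, y))"
    by (rule has_derivative_mult_right[OF fd_works[OF assms(4)[OF xy]]])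
  have "((f \<circ> S) has_derivative (\<lambda>h. t powr r * frechet_derivative f (at (x, y)) h)) (at (x, y))"
  proof (rule has_derivative_transform_within_open[OF d2 assms(1) xy])
    fix q assume "q \<in> A"
    then show "t powr r * f q = (f \<circ> S) q"
      using assms(3) t unfolding hom_deg_def S_def by (cases q) simp
  qed
  from has_derivative_unique[OF d1 this]
  have "(frechet_derivative f (at (x, t *\<^sub>R y)) \<circ> S) (0, u) = t powr r * frechet_derivative f (at (x, y)) (0, u)"
    by metis
  then have "frechet_derivative f (at (x, t *\<^sub>R y)) (t *\<^sub>R (0, u)) = t powr r * vd f (x, y) u"
    by (simp add: S_def vd_def)
  moreover have "frechet_derivative f (at (x, t *\<^sub>R y)) (t *\<^sub>R (0, u)) = t * vd f (x, t *\<^sub>R y) u"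
    using fd_scale[OF assms(4)[OF txy], of t "(0, u)"] by (simp add: vd_def)
  ultimately have "t * vd f (x, t *\<^sub>R y) u = t powr r * vd f (x, y) u"
    by simp
  then have V: "vd f (x, t *\<^sub>R y) u = t powr r * vd f (x, y) u / t"
    using t by (simp add: field_simps)
  have e: "t powr (r - 1) = t powr r / t" using t by (simp add: powr_diff)
  show "vd f (x, t *\<^sub>R y) u = t powr (r - 1) * vd f (x, y) u"
    unfolding e V by simp
qed

lemma vert_const:
  fixes h :: "pt \<Rightarrow> real"
  assumes "open A" "p \<in> A" "h differentiable (at p)" "\<And>q. q \<in> A \<Longrightarrow> h q = h0 (fst q)"
  shows "vd h p v = 0"
proof -
  define \<gamma> where "\<gamma> = (\<lambda>t::real. p + t *\<^sub>R ((0::real^2), v))"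
  have g: "(\<gamma> has_derivative (\<lambda>s. s *\<^sub>R ((0::real^2), v))) (at 0)"
    unfolding \<gamma>_def
    using has_derivative_add[OF has_derivative_const[of p] has_derivative_scaleR_left[OF has_derivative_ident, of "((0::real^2), v)" "at 0"]]
    by simp
  have "(h has_derivative frechet_derivative h (at p)) (at (\<gamma> 0))"
    using fd_works[OF assms(3)] by (simp add: \<gamma>_def zero_prod_def[symmetric])
  from diff_chain_at[OF g this]
  have d1: "((h \<circ> \<gamma>) has_derivative (frechet_derivative h (at p) \<circ> (\<lambda>s. s *\<^sub>R ((0::real^2), v)))) (at 0)" .
  have op: "open (\<gamma> -` A)"
    by (rule open_vimage[OF assms(1)]) (unfold \<gamma>_def, intro continuous_intros)
  have "((h \<circ> \<gamma>) has_derivative (\<lambda>s. 0)) (at 0)"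
  proof (rule has_derivative_transform_within_open[OF has_derivative_const op])
    show "0 \<in> \<gamma> -` A" using assms(2) by (simp add: \<gamma>_def zero_prod_def[symmetric])
    fix t assume "t \<in> \<gamma> -` A"
    then show "h0 (fst p) = (h \<circ> \<gamma>) t" using assms(4) by (simp add: \<gamma>_def)
  qed
  from has_derivative_unique[OF d1 this]
  have "(frechet_derivative h (at p) \<circ> (\<lambda>s. s *\<^sub>R ((0::real^2), v))) 1 = 0" by metis
  then show ?thesis by (simp add: vd_def)
qed

lemma dir_zero:
  fixes f1 f2 g :: "pt \<Rightarrow> real" and K :: "real \<times> real \<Rightarrow> real"
  assumes "open S" "p \<in> S" "f1 differentiable (at p)" "f2 differentiable (at p)"
    "frechet_derivative f1 (at p) d = 0" "frechet_derivative f2 (at p) d = 0"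
    "K differentiable (at (f1 p, f2 p))"
    "\<And>q. q \<in> S \<Longrightarrow> g q = K (f1 q, f2 q)"
  shows "g differentiable (at p) \<and> frechet_derivative g (at p) d = 0"
proof -
  obtain K' where K': "(K has_derivative K') (at (f1 p, f2 p))"
    using assms(7) unfolding differentiable_def by blast
  have P: "((\<lambda>q. (f1 q, f2 q)) has_derivative
      (\<lambda>h. (frechet_derivative f1 (at p) h, frechet_derivative f2 (at p) h))) (at p)"
    by (rule has_derivative_Pair[OF fd_works[OF assms(3)] fd_works[OF assms(4)]])
  from diff_chain_at[OF P K']
  have "((K \<circ> (\<lambda>q. (f1 q, f2 q))) has_derivative
     (K' \<circ> (\<lambda>h. (frechet_derivative f1 (at p) h, frechet_derivative f2 (at p) h)))) (at p)"
    by simp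
  then have D: "(g has_derivative
     (K' \<circ> (\<lambda>h. (frechet_derivative f1 (at p) h, frechet_derivative f2 (at p) h)))) (at p)"
    by (rule has_derivative_transform_within_open[OF _ assms(1,2)]) (simp add: assms(8))
  have z: "K' 0 = 0"
  proof -
    interpret bounded_linear K' using K' has_derivative_bounded_linear by blast
    show ?thesis by (rule zero)
  qed
  have "frechet_derivative g (at p) d = K' (0, 0)"
    using fun_cong[OF frechet_derivative_at[OF D], of d, symmetric] assms(5,6) by simp
  also have "\<dots> = 0" using z by (simp add: zero_prod_def)
  finally show ?thesis using differentiableI[OF D] by simp
qed

lemma sqrt_differentiable:
  fixes f :: "'a::real_normed_vector \<Rightarrow> real"
  assumes "f differentiable (at x)" "f x > 0"
  shows "(\<lambda>z. sqrt (f z)) differentiable (at x)"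
proof -
  have "sqrt differentiable (at (f x))"
    using differentiableI[OF has_field_derivative_imp_has_derivative[OF DERIV_real_sqrt[OF assms(2)]]] .
  from differentiable_compose[OF this assms(1)] show ?thesis .
qed

lemma ln_differentiable:
  fixes f :: "'a::real_normed_vector \<Rightarrow> real"
  assumes "f differentiable (at x)" "f x > 0"
  shows "(\<lambda>z. ln (f z)) differentiable (at x)"
proof -
  have "ln differentiable (at (f x))"
    using differentiableI[OF has_field_derivative_imp_has_derivative[OF DERIV_ln[OF assms(2)]]] .
  from differentiable_compose[OF this assms(1)] show ?thesis .
qed




lemma inner2: "(a::real^2) \<bullet> b = a$1 * b$1 + a$2 * b$2"
  by (simp add: inner_vec_def sum_2)

lemma kernel2:
  fixes L1 L2 M1 M2 :: real
  assumes "L1 * M2 - L2 * M1 = 0"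
  shows "\<exists>u::real^2. u \<noteq> 0 \<and> u$1 * L1 + u$2 * L2 = 0 \<and> u$1 * M1 + u$2 * M2 = 0"
proof (cases "L1 = 0 \<and> L2 = 0")
  case False
  show ?thesis
    by (rule exI[of _ "vector [-L2, L1]"]) (use False assms in \<open>auto simp: vec_eq_iff forall_2 algebra_simps\<close>)
next
  case L: True
  show ?thesis
  proof (cases "M1 = 0 \<and> M2 = 0")
    case True
    show ?thesis
      by (rule exI[of _ "vector [1, 0]"]) (use True L in \<open>auto simp: vec_eq_iff forall_2\<close>)
  next
    case False
    show ?thesis
      by (rule exI[of _ "vector [-M2, M1]"]) (use False L in \<open>auto simp: vec_eq_iff forall_2 algebra_simps\<close>)
  qed
qed

lemma alg1: fixes d e L1 L2 M1 M2 :: real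
  shows "d \<noteq> 0 \<Longrightarrow> d = L1 * M2 - L2 * M1 \<Longrightarrow> (e / d * - L2) * M1 + (e / d * L1) * M2 = e"
proof -
  assume d: "d \<noteq> 0" "d = L1 * M2 - L2 * M1"
  have "(e / d * - L2) * M1 + (e / d * L1) * M2 = e / d * (L1 * M2 - L2 * M1)"
    by (simp add: algebra_simps)
  also have "\<dots> = e" using d by simp
  finally show ?thesis .
qed

locale fsetting =
  fixes U :: "(real^2) set" and A :: "pt set" and F :: "pt \<Rightarrow> real"
    and eps :: real and m :: "pt \<Rightarrow> real^2"
  assumes pf: "pseudo_finsler U A F" and bf: "berwald_frame A F eps m"
begin

lemma A_open: "open A"
  using pf unfolding pseudo_finsler_def conic_subbundle_def by blast

lemma A_conic: "conic A"
  using pf unfolding pseudo_finsler_def conic_subbundle_def conic_def by blast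

lemma y_nz: "(x, y) \<in> A \<Longrightarrow> y \<noteq> 0"
  using pf unfolding pseudo_finsler_def conic_subbundle_def by blast

lemma F_smooth: "smooth_on A F"
  using pf unfolding pseudo_finsler_def by blast

lemma F_hom: "hom_deg A 1 F"
  using pf unfolding pseudo_finsler_def by blast

lemma nondeg: "p \<in> A \<Longrightarrow> (\<And>v. gF F p u v = 0) \<Longrightarrow> u = 0"
  using pf unfolding pseudo_finsler_def by blast

lemma eps_cases: "eps = 1 \<or> eps = -1"
  using bf unfolding berwald_frame_def by auto

lemma eps2: "eps * eps = 1"
  using eps_cases by auto

lemma eps_nz: "eps \<noteq> 0"
  using eps_cases by auto

lemma m_smooth: "smooth_on A (\<lambda>p. m p \<bullet> u)"
  using bf unfolding berwald_frame_def by blast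

lemma berw: "p \<in> A \<Longrightarrow> gF F p u v = vd F p u * vd F p v + eps * (m p \<bullet> u) * (m p \<bullet> v)"
  using bf unfolding berwald_frame_def by blast

lemma F_diff: "p \<in> A \<Longrightarrow> F differentiable (at p)"
  using smooth_diff[OF A_open F_smooth] .

definition L1 where "L1 q = vd F q (axis 1 1)"
definition L2 where "L2 q = vd F q (axis 2 1)"
definition M1 where "M1 q = m q $ 1"
definition M2 where "M2 q = m q $ 2"
definition Dt where "Dt q = L1 q * M2 q - L2 q * M1 q"

lemma ell_coord: "q \<in> A \<Longrightarrow> vd F q v = v$1 * L1 q + v$2 * L2 q"
  unfolding L1_def L2_def by (rule vd_coord[OF F_diff])

lemma m_coord: "m q \<bullet> v = v$1 * M1 q + v$2 * M2 q"
  unfolding M1_def M2_def inner2 by simp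

lemma L1_smooth: "smooth_on A L1"
  unfolding L1_def[abs_def] by (rule smooth_vd[OF F_smooth])
lemma L2_smooth: "smooth_on A L2"
  unfolding L2_def[abs_def] by (rule smooth_vd[OF F_smooth])
lemma M1_smooth: "smooth_on A M1"
proof -
  have "M1 = (\<lambda>p. m p \<bullet> axis 1 1)" by (simp add: M1_def fun_eq_iff inner_axis)
  then show ?thesis using m_smooth by simp
qed
lemma M2_smooth: "smooth_on A M2"
proof -
  have "M2 = (\<lambda>p. m p \<bullet> axis 2 1)" by (simp add: M2_def fun_eq_iff inner_axis)
  then show ?thesis using m_smooth by simp
qed

lemma sdiff: "smooth_on A f \<Longrightarrow> p \<in> A \<Longrightarrow> f differentiable (at p)"
  using smooth_diff[OF A_open] by blast

lemma Dt_nz: assumes q: "q \<in> A" shows "Dt q \<noteq> 0"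
proof
  assume "Dt q = 0"
  then obtain u :: "real^2" where u: "u \<noteq> 0" "u$1 * L1 q + u$2 * L2 q = 0" "u$1 * M1 q + u$2 * M2 q = 0"
    using kernel2[of "L1 q" "M2 q" "L2 q" "M1 q"] unfolding Dt_def by blast
  have "gF F q u v = 0" for v
    using berw[OF q, of u v] ell_coord[OF q, of u] m_coord[of q u] u by simp
  then have "u = 0" using nondeg[OF q] by blast
  with u show False by blast
qed

definition w0 :: "pt \<Rightarrow> real^2" where "w0 q = (eps / Dt q) *\<^sub>R vector [- L2 q, L1 q]"

lemma w0_props: assumes q: "q \<in> A"
  shows "vd F q (w0 q) = 0" "m q \<bullet> w0 q = eps"
proof -
  show "vd F q (w0 q) = 0"
    unfolding ell_coord[OF q] w0_def by (simp add: algebra_simps)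
  show "m q \<bullet> w0 q = eps"
    unfolding m_coord w0_def using alg1[OF Dt_nz[OF q] Dt_def] by simp
qed

lemma mup_eq: assumes q: "q \<in> A" shows "mup F m q = w0 q"
  unfolding mup_def
proof (rule the_equality)
  show "\<forall>v. gF F q (w0 q) v = m q \<bullet> v"
    using berw[OF q] w0_props[OF q] eps2 by simp
next
  fix w assume w: "\<forall>v. gF F q w v = m q \<bullet> v"
  have "gF F q (w - w0 q) v = 0" for v
  proof -
    have "gF F q (w - w0 q) v = gF F q w v - gF F q (w0 q) v"
      unfolding berw[OF q] ell_coord[OF q] m_coord by (simp add: algebra_simps)
    also have "\<dots> = 0" using w berw[OF q] w0_props[OF q] eps2 by simp
    finally show ?thesis .
  qed
  then have "w - w0 q = 0" using nondeg[OF q] by blast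
  then show "w = w0 q" by simp
qed

lemma d2_eq:
  assumes q: "q \<in> A" and f: "f differentiable (at q)"
  shows "d2 F eps m f q = eps * F q * ((eps / Dt q) * (- L2 q * vd f q (axis 1 1) + L1 q * vd f q (axis 2 1)))"
proof -
  have "d2 F eps m f q = eps * F q * vd f q (w0 q)" by (simp add: d2_def mup_eq[OF q])
  also have "vd f q (w0 q) = (w0 q)$1 * vd f q (axis 1 1) + (w0 q)$2 * vd f q (axis 2 1)"
    by (rule vd_coord[OF f])
  finally show ?thesis by (simp add: w0_def algebra_simps)
qed

lemma d2_diff:
  assumes f: "smooth_on A f" and p: "p \<in> A"
  shows "d2 F eps m f differentiable (at p)"
proof -
  have e: "d2 F eps m f q = eps * F q * ((eps / (L1 q * M2 q - L2 q * M1 q)) *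
      (- L2 q * vd f q (axis 1 1) + L1 q * vd f q (axis 2 1)))" if "q \<in> A" for q
    using d2_eq[OF that sdiff[OF f that]] by (simp add: Dt_def)
  have "(\<lambda>q. eps * F q * ((eps / (L1 q * M2 q - L2 q * M1 q)) *
      (- L2 q * vd f q (axis 1 1) + L1 q * vd f q (axis 2 1)))) differentiable (at p)"
    using Dt_nz[OF p] unfolding Dt_def
    by (intro differentiable_mult differentiable_divide differentiable_add differentiable_diff
        differentiable_minus differentiable_const F_diff p sdiff[OF L1_smooth p] sdiff[OF L2_smooth p]
        sdiff[OF M1_smooth p] sdiff[OF M2_smooth p] sdiff[OF smooth_vd[OF f] p]) auto
  note D = this
  from fd_local[OF A_open p D e] show ?thesis by blast
qed

end



definition zv :: "real^2 \<Rightarrow> real^2" where "zv y = vector [- y$2, y$1]"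
definition az :: "real^2 \<Rightarrow> real^2 \<Rightarrow> real" where
  "az y v = (v$1 * y$1 + v$2 * y$2) / (y$1^2 + y$2^2)"
definition bz :: "real^2 \<Rightarrow> real^2 \<Rightarrow> real" where
  "bz y v = (- v$1 * y$2 + v$2 * y$1) / (y$1^2 + y$2^2)"

lemma sq_pos: "(y::real^2) \<noteq> 0 \<Longrightarrow> y$1^2 + y$2^2 > 0"
proof -
  assume "y \<noteq> 0"
  then have "y$1 \<noteq> 0 \<or> y$2 \<noteq> 0" by (auto simp: vec_eq_iff forall_2)
  then show ?thesis by (simp add: sum_power2_gt_zero_iff)
qed

lemma alg2:
  fixes a b p q N :: real
  assumes "N \<noteq> 0" "N = a^2 + b^2"
  shows "(p*a + q*b)/N * a + (-p*b + q*a)/N * (-b) = p"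
    and "(p*a + q*b)/N * b + (-p*b + q*a)/N * a = q"
proof -
  have "(p*a + q*b)/N * a + (-p*b + q*a)/N * (-b) = p * (a^2 + b^2) / N"
    using assms(1) by (simp add: field_simps power2_eq_square)
  also have "\<dots> = p * N / N" by (simp only: assms(2))
  finally show "(p*a + q*b)/N * a + (-p*b + q*a)/N * (-b) = p" using assms(1) by simp
  have "(p*a + q*b)/N * b + (-p*b + q*a)/N * a = q * (a^2 + b^2) / N"
    using assms(1) by (simp add: field_simps power2_eq_square)
  also have "\<dots> = q * N / N" by (simp only: assms(2))
  finally show "(p*a + q*b)/N * b + (-p*b + q*a)/N * a = q" using assms(1) by simp
qed

lemma decomp2:
  assumes "(y::real^2) \<noteq> 0"
  shows "v = az y v *\<^sub>R y + bz y v *\<^sub>R zv y"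
proof -
  have n: "y$1^2 + y$2^2 \<noteq> 0" using sq_pos[OF assms] by (metis order_less_irrefl)
  note a = alg2[OF n refl, of "v$1" "v$2"]
  show ?thesis
    unfolding vec_eq_iff forall_2 using a by (simp add: az_def bz_def zv_def)
qed

context fsetting
begin

definition G :: "pt \<Rightarrow> real" where "G = (\<lambda>s. (F s)^2)"
definition gu :: "real^2 \<Rightarrow> pt \<Rightarrow> real" where "gu u = (\<lambda>r. vd G r u)"
definition hh :: "real^2 \<Rightarrow> real^2 \<Rightarrow> pt \<Rightarrow> real" where "hh u v = (\<lambda>q. vd (gu u) q v)"

lemma CF_hh: "CF F q u v w = 1/4 * vd (hh u v) q w"
  unfolding CF_def hh_def gu_def G_def by simp

lemma gF_hh: "gF F r u v = 1/2 * hh u v r"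
  unfolding gF_def hh_def gu_def G_def by simp

lemma G_smooth: "smooth_on A G"
proof -
  have "G = (\<lambda>s. F s * F s)" by (simp add: G_def power2_eq_square)
  then show ?thesis using smooth_mult[OF A_open F_smooth F_smooth] by simp
qed

lemma gu_smooth: "smooth_on A (gu u)"
  unfolding gu_def by (rule smooth_vd[OF G_smooth])
lemma hh_smooth: "smooth_on A (hh u v)"
  unfolding hh_def by (rule smooth_vd[OF gu_smooth])
lemma T_smooth: "smooth_on A (\<lambda>q. vd (hh u v) q w)"
  by (rule smooth_vd[OF hh_smooth])

lemma G_diff: "q \<in> A \<Longrightarrow> G differentiable (at q)" by (rule sdiff[OF G_smooth])
lemma gu_diff: "q \<in> A \<Longrightarrow> gu u differentiable (at q)" by (rule sdiff[OF gu_smooth])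
lemma hh_diff: "q \<in> A \<Longrightarrow> hh u v differentiable (at q)" by (rule sdiff[OF hh_smooth])

lemma G_hom: "hom_deg A 2 G"
  unfolding hom_deg_def G_def
proof (intro allI impI)
  fix x y and t :: real assume "(x, y) \<in> A" "t > 0"
  then show "(F (x, t *\<^sub>R y))\<^sup>2 = t powr 2 * (F (x, y))\<^sup>2"
    using F_hom unfolding hom_deg_def by (simp add: power_mult_distrib)
qed

lemma gu_hom: "hom_deg A 1 (gu u)"
  using hom_vd[OF A_open A_conic G_hom G_diff, of u] unfolding gu_def by simp

lemma hh_hom: "hom_deg A 0 (hh u v)"
  using hom_vd[OF A_open A_conic gu_hom[where u=u] gu_diff[where u=u], where u=v] unfolding hh_def by simp

lemma E_F: "(x, y) \<in> A \<Longrightarrow> vd F (x, y) y = F (x, y)"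
  using euler[OF A_open A_conic F_hom _ F_diff] by simp
lemma E_G: "(x, y) \<in> A \<Longrightarrow> vd G (x, y) y = 2 * G (x, y)"
  using euler[OF A_open A_conic G_hom _ G_diff] by simp
lemma E_gu: "(x, y) \<in> A \<Longrightarrow> vd (gu u) (x, y) y = gu u (x, y)"
  using euler[OF A_open A_conic gu_hom _ gu_diff] by simp
lemma E_hh: "(x, y) \<in> A \<Longrightarrow> vd (hh u v) (x, y) y = 0"
  using euler[OF A_open A_conic hh_hom _ hh_diff] by simp

lemma m_y: assumes q: "(x, y) \<in> A" shows "m (x, y) \<bullet> y = 0"
proof -
  have "gF F (x, y) y y = 1/2 * vd (gu y) (x, y) y" by (simp add: gF_hh hh_def)
  also have "\<dots> = 1/2 * vd G (x, y) y" using E_gu[OF q] by (simp add: gu_def)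
  also have "\<dots> = (F (x, y))^2" using E_G[OF q] by (simp add: G_def)
  finally have "(F (x, y))^2 = F (x, y) * F (x, y) + eps * (m (x, y) \<bullet> y) * (m (x, y) \<bullet> y)"
    using berw[OF q, of y y] E_F[OF q] by simp
  then have "eps * ((m (x, y) \<bullet> y) * (m (x, y) \<bullet> y)) = 0" by (simp add: power2_eq_square)
  then show ?thesis using eps_nz by simp
qed

lemma hh_sym: assumes r: "r \<in> A" shows "hh u v r = hh v u r"
proof -
  have "hh u v r = 2 * gF F r u v" by (simp add: gF_hh)
  also have "\<dots> = 2 * gF F r v u" using berw[OF r, of u v] berw[OF r, of v u] by (simp add: ac_simps)
  also have "\<dots> = hh v u r" by (simp add: gF_hh)
  finally show ?thesis .
qed

lemma T_sym: assumes q: "q \<in> A" shows "vd (hh u v) q w = vd (hh v u) q w"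
proof -
  have "frechet_derivative (hh u v) (at q) = frechet_derivative (hh v u) (at q)"
    using fd_local[OF A_open q hh_diff[OF q, of v u], of "hh u v"] hh_sym by blast
  then show ?thesis by (simp add: vd_def)
qed

lemma T_lin2: assumes q: "q \<in> A"
  shows "vd (hh u (a *\<^sub>R v1 + b *\<^sub>R v2)) q w = a * vd (hh u v1) q w + b * vd (hh u v2) q w"
proof -
  have "hh u (a *\<^sub>R v1 + b *\<^sub>R v2) r = a * hh u v1 r + b * hh u v2 r" if "r \<in> A" for r
    unfolding hh_def by (rule vd_lin[OF gu_diff[OF that]])
  from fd_lc[OF A_open q hh_diff[OF q] hh_diff[OF q] this] show ?thesis
    unfolding vd_def by blast
qed

lemma T_lin3: assumes q: "q \<in> A"
  shows "vd (hh u v) q (a *\<^sub>R w1 + b *\<^sub>R w2) = a * vd (hh u v) q w1 + b * vd (hh u v) q w2"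
  by (rule vd_lin[OF hh_diff[OF q]])

lemma sn_deriv: "((\<lambda>r::pt. snd r $ i) has_derivative (\<lambda>d. snd d $ i)) (at q)"
  by (rule bounded_linear.has_derivative[OF bounded_linear_vec_nth has_derivative_snd[OF has_derivative_ident]])

lemma T_y2: assumes q: "(x, y) \<in> A" shows "vd (hh u y) (x, y) w = 0"
proof -
  define H1 where "H1 = hh u (axis 1 1)"
  define H2 where "H2 = hh u (axis 2 1)"
  have H1d: "H1 differentiable (at (x, y))" and H2d: "H2 differentiable (at (x, y))"
    unfolding H1_def H2_def using hh_diff[OF q] by auto
  have on: "gu u r = snd r $ 1 * H1 r + snd r $ 2 * H2 r" if r: "r \<in> A" for r
  proof -
    obtain a b where ab: "r = (a, b)" by (cases r)
    have "gu u r = vd (gu u) r b" using E_gu[of a b u] r ab by simp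
    also have "\<dots> = b$1 * vd (gu u) r (axis 1 1) + b$2 * vd (gu u) r (axis 2 1)"
      by (rule vd_coord[OF gu_diff[OF r]])
    finally show ?thesis by (simp add: ab H1_def H2_def hh_def)
  qed
  have D: "((\<lambda>r. snd r $ 1 * H1 r + snd r $ 2 * H2 r) has_derivative
     (\<lambda>h. (snd (x, y) $ 1 * frechet_derivative H1 (at (x, y)) h + snd h $ 1 * H1 (x, y)) +
          (snd (x, y) $ 2 * frechet_derivative H2 (at (x, y)) h + snd h $ 2 * H2 (x, y)))) (at (x, y))"
    by (rule has_derivative_add[OF has_derivative_mult[OF sn_deriv fd_works[OF H1d]]
          has_derivative_mult[OF sn_deriv fd_works[OF H2d]]])
  have "(gu u has_derivative
     (\<lambda>h. (snd (x, y) $ 1 * frechet_derivative H1 (at (x, y)) h + snd h $ 1 * H1 (x, y)) +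
          (snd (x, y) $ 2 * frechet_derivative H2 (at (x, y)) h + snd h $ 2 * H2 (x, y)))) (at (x, y))"
    by (rule has_derivative_transform_within_open[OF D A_open q]) (simp add: on)
  from fun_cong[OF frechet_derivative_at[OF this], of "(0, w)"]
  have e1: "vd (gu u) (x, y) w = y$1 * vd H1 (x, y) w + w$1 * H1 (x, y) + (y$2 * vd H2 (x, y) w + w$2 * H2 (x, y))"
    by (simp add: vd_def)
  have e2: "vd (gu u) (x, y) w = w$1 * H1 (x, y) + w$2 * H2 (x, y)"
    using vd_coord[OF gu_diff[OF q, where u=u], where v=w] by (simp add: H1_def H2_def hh_def)
  from e1 e2 have z: "y$1 * vd H1 (x, y) w + y$2 * vd H2 (x, y) w = 0" by simp
  have "hh u y r = y$1 * H1 r + y$2 * H2 r" if "r \<in> A" for r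
    using vd_coord[OF gu_diff[OF that, where u=u], where v=y] by (simp add: H1_def H2_def hh_def)
  from fd_lc[OF A_open q H1d H2d this, of "(0, w)"]
  have "vd (hh u y) (x, y) w = y$1 * vd H1 (x, y) w + y$2 * vd H2 (x, y) w"
    by (simp add: vd_def)
  with z show ?thesis by simp
qed

end



lemma alg3:
  fixes a b M1 M2 :: real
  assumes "a*M1 + b*M2 = 0" "-b*M1 + a*M2 = 0" "a^2 + b^2 \<noteq> 0"
  shows "M1 = 0 \<and> M2 = 0"
proof -
  have "M1 * (a^2 + b^2) = a*(a*M1 + b*M2) - b*(-b*M1 + a*M2)"
    by (simp add: algebra_simps power2_eq_square)
  then have "M1 * (a^2 + b^2) = 0" using assms by simp
  then have 1: "M1 = 0" using assms(3) by (metis mult_eq_0_iff)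
  have "M2 * (a^2 + b^2) = b*(a*M1 + b*M2) + a*(-b*M1 + a*M2)"
    by (simp add: algebra_simps power2_eq_square)
  then have "M2 * (a^2 + b^2) = 0" using assms by simp
  then have "M2 = 0" using assms(3) by (metis mult_eq_0_iff)
  with 1 show ?thesis by simp
qed

lemma alg4:
  fixes k Fq T a b c :: real
  assumes "k \<noteq> 0"
  shows "Fq * (1/4 * (a*b*c*T)) = Fq * (1/4 * T) / k^3 * (a*k) * (b*k) * (c*k)"
  using assms by (simp add: field_simps power3_eq_cube)

context fsetting
begin

lemma T_slot2: assumes q: "(x, y) \<in> A"
  shows "vd (hh u v) (x, y) w = bz y v * vd (hh u (zv y)) (x, y) w"
proof -
  have ynz: "y \<noteq> 0" using y_nz[OF q] .
  have "vd (hh u v) (x, y) w = vd (hh u (az y v *\<^sub>R y + bz y v *\<^sub>R zv y)) (x, y) w"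
    using decomp2[OF ynz, of v] by (rule arg_cong[where f="\<lambda>v. vd (hh u v) (x, y) w"])
  also have "\<dots> = az y v * vd (hh u y) (x, y) w + bz y v * vd (hh u (zv y)) (x, y) w"
    by (rule T_lin2[OF q])
  also have "\<dots> = bz y v * vd (hh u (zv y)) (x, y) w" using T_y2[OF q] by simp
  finally show ?thesis .
qed

lemma T_form: assumes q: "(x, y) \<in> A"
  shows "vd (hh u v) (x, y) w = bz y u * bz y v * bz y w * vd (hh (zv y) (zv y)) (x, y) (zv y)"
proof -
  have ynz: "y \<noteq> 0" using y_nz[OF q] .
  have s1: "vd (hh u v) (x, y) w = bz y w * vd (hh u v) (x, y) (zv y)"
  proof -
    have "vd (hh u v) (x, y) w = vd (hh u v) (x, y) (az y w *\<^sub>R y + bz y w *\<^sub>R zv y)"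
      using decomp2[OF ynz, of w] by (rule arg_cong[where f="\<lambda>w. vd (hh u v) (x, y) w"])
    also have "\<dots> = az y w * vd (hh u v) (x, y) y + bz y w * vd (hh u v) (x, y) (zv y)"
      by (rule T_lin3[OF q])
    also have "\<dots> = bz y w * vd (hh u v) (x, y) (zv y)" using E_hh[OF q] by simp
    finally show ?thesis .
  qed
  have s2: "vd (hh u v) (x, y) (zv y) = bz y v * vd (hh u (zv y)) (x, y) (zv y)"
    by (rule T_slot2[OF q])
  have s3: "vd (hh u (zv y)) (x, y) (zv y) = bz y u * vd (hh (zv y) (zv y)) (x, y) (zv y)"
    using T_sym[OF q, of u "zv y" "zv y"] T_slot2[OF q, of "zv y" u "zv y"] by simp
  show ?thesis using s1 s2 s3 by simp
qed

lemma m_form: assumes q: "(x, y) \<in> A"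
  shows "m (x, y) \<bullet> v = bz y v * (m (x, y) \<bullet> zv y)"
proof -
  have ynz: "y \<noteq> 0" using y_nz[OF q] .
  have "m (x, y) \<bullet> v = m (x, y) \<bullet> (az y v *\<^sub>R y + bz y v *\<^sub>R zv y)"
    using decomp2[OF ynz, of v] by (rule arg_cong)
  also have "\<dots> = az y v * (m (x, y) \<bullet> y) + bz y v * (m (x, y) \<bullet> zv y)"
    by (simp add: inner_add_right)
  also have "\<dots> = bz y v * (m (x, y) \<bullet> zv y)" using m_y[OF q] by simp
  finally show ?thesis .
qed

lemma m_z: assumes q: "(x, y) \<in> A" shows "m (x, y) \<bullet> zv y \<noteq> 0"
proof
  assume mz: "m (x, y) \<bullet> zv y = 0"
  have my: "m (x, y) \<bullet> y = 0" by (rule m_y[OF q])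
  have n: "y$1^2 + y$2^2 \<noteq> 0" using sq_pos[OF y_nz[OF q]] by (metis order_less_irrefl)
  have "y$1 * M1 (x, y) + y$2 * M2 (x, y) = 0" using my m_coord[of "(x, y)" y] by simp
  moreover have "- y$2 * M1 (x, y) + y$1 * M2 (x, y) = 0" using mz m_coord[of "(x, y)" "zv y"] by (simp add: zv_def)
  ultimately have "M1 (x, y) = 0 \<and> M2 (x, y) = 0" using alg3 n by blast
  then have "Dt (x, y) = 0" by (simp add: Dt_def)
  with Dt_nz[OF q] show False by simp
qed

lemma ms_exists: assumes q: "q \<in> A"
  shows "\<exists>c. \<forall>u v w. F q * CF F q u v w = c * (m q \<bullet> u) * (m q \<bullet> v) * (m q \<bullet> w)"
proof -
  obtain x y where xy: "q = (x, y)" by (cases q)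
  have qa: "(x, y) \<in> A" using q xy by simp
  define k where "k = m (x, y) \<bullet> zv y"
  have k: "k \<noteq> 0" unfolding k_def by (rule m_z[OF qa])
  define T where "T = vd (hh (zv y) (zv y)) (x, y) (zv y)"
  show ?thesis
  proof (intro exI allI)
    fix u v w
    have "F q * CF F q u v w = F q * (1/4 * (bz y u * bz y v * bz y w * T))"
      unfolding CF_hh xy T_def using T_form[OF qa, of u v w] by simp
    also have "\<dots> = F q * (1/4 * T) / k^3 * (bz y u * k) * (bz y v * k) * (bz y w * k)"
      by (rule alg4[OF k])
    also have "\<dots> = F q * (1/4 * T) / k^3 * (m q \<bullet> u) * (m q \<bullet> v) * (m q \<bullet> w)"
      unfolding xy m_form[OF qa, of u] m_form[OF qa, of v] m_form[OF qa, of w] k_def ..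
    finally show "F q * CF F q u v w = F q * (1/4 * T) / k^3 * (m q \<bullet> u) * (m q \<bullet> v) * (m q \<bullet> w)" .
  qed
qed

lemma ms_eq: assumes q: "q \<in> A" and z: "m q \<bullet> z \<noteq> 0"
  shows "main_scalar F m q = F q * CF F q z z z / (m q \<bullet> z)^3"
proof -
  obtain c where c: "\<forall>u v w. F q * CF F q u v w = c * (m q \<bullet> u) * (m q \<bullet> v) * (m q \<bullet> w)"
    using ms_exists[OF q] by blast
  have k3: "(m q \<bullet> z)^3 \<noteq> 0" using z by simp
  have cz: "F q * CF F q z z z = c * (m q \<bullet> z)^3" using c by (simp add: power3_eq_cube mult.assoc)
  have "main_scalar F m q = c"
    unfolding main_scalar_def
  proof (rule the_equality)
    show "\<forall>u v w. F q * CF F q u v w = c * (m q \<bullet> u) * (m q \<bullet> v) * (m q \<bullet> w)" by (rule c)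
  next
    fix c' assume "\<forall>u v w. F q * CF F q u v w = c' * (m q \<bullet> u) * (m q \<bullet> v) * (m q \<bullet> w)"
    then have "F q * CF F q z z z = c' * (m q \<bullet> z)^3" by (simp add: power3_eq_cube mult.assoc)
    with cz k3 show "c' = c" by simp
  qed
  then show ?thesis using cz k3 by simp
qed

lemma ms_diff: assumes p: "p \<in> A" shows "main_scalar F m differentiable (at p)"
proof -
  obtain x y where xy: "p = (x, y)" by (cases p)
  define z where "z = zv y"
  have kp: "m p \<bullet> z \<noteq> 0" unfolding z_def xy by (rule m_z[OF p[unfolded xy]])
  define N where "N = A \<inter> (\<lambda>q. m q \<bullet> z) -` (- {0})"
  have No: "open N" unfolding N_def
    by (rule continuous_open_preimage[OF smooth_cont[OF m_smooth] A_open]) auto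
  have pN: "p \<in> N" unfolding N_def using p kp by simp
  have eq: "main_scalar F m q = F q * CF F q z z z / (m q \<bullet> z)^3" if "q \<in> N" for q
    using that ms_eq[of q z] unfolding N_def by simp
  have d1: "(\<lambda>q. CF F q z z z) differentiable (at p)"
    unfolding CF_hh by (intro differentiable_mult differentiable_const sdiff[OF T_smooth p])
  have d2: "(\<lambda>q. m q \<bullet> z) differentiable (at p)" by (rule sdiff[OF m_smooth p])
  have "(\<lambda>q. F q * CF F q z z z / (m q \<bullet> z)^3) differentiable (at p)"
    using kp by (intro differentiable_divide differentiable_mult differentiable_power d1 d2 F_diff p) auto
  note D = this
  from fd_local[OF No pN D eq] show ?thesis by blast
qed

end



lemma fst_d: "(\<lambda>z::real\<times>real. fst z) differentiable (at z0)"
  using differentiableI[OF has_derivative_fst[OF has_derivative_ident]] .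
lemma snd_d: "(\<lambda>z::real\<times>real. snd z) differentiable (at z0)"
  using differentiableI[OF has_derivative_snd[OF has_derivative_ident]] .

theorem proposition4p2:
  fixes U :: "(real^2) set" and A :: "pt set" and F \<phi> :: "pt \<Rightarrow> real"
    and eps :: real and m :: "pt \<Rightarrow> real^2"
  assumes "pseudo_finsler U A F"
    and "berwald_frame A F eps m"
    and "T_condition A F eps m"
    and "conformal_change A F eps m \<phi>"
  shows "((\<exists>h :: real^2 \<Rightarrow> real. \<forall>p\<in>A. d2 F eps m \<phi> p = h (fst p))
            \<longrightarrow> T_condition_cc A F eps m \<phi>)
       \<and> ((\<forall>p\<in>A. sigma_cc F eps m \<phi> p = (d2 F eps m \<phi> p)\<^sup>2)
            \<longrightarrow> (T_condition_cc A F eps m \<phi> \<longleftrightarrow>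
                 (\<forall>p\<in>A. d2 F eps m (d2 F eps m \<phi>) p = 0)))"
proof -
  interpret fsetting U A F eps m using assms(1,2) by unfold_locales
  have phi_s: "smooth_on A \<phi>" and rho_pos: "\<And>p. p \<in> A \<Longrightarrow> eps * rho_cc F eps m \<phi> p > 0"
    using assms(4) unfolding conformal_change_def by auto
  define I where "I = main_scalar F m"
  define H where "H = d2 F eps m \<phi>"
  have Id: "I differentiable (at q)" if "q \<in> A" for q unfolding I_def by (rule ms_diff[OF that])
  have Hd: "H differentiable (at q)" if "q \<in> A" for q unfolding H_def by (rule d2_diff[OF phi_s that])
  have Tc: "vd I q (mup F m q) = 0" if "q \<in> A" "F q \<noteq> 0" for q
  proof -
    have "eps * F q * vd I q (mup F m q) = 0"
      using assms(3) that(1) unfolding T_condition_def d2_def I_def by blast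
    then show ?thesis using that(2) eps_nz by simp
  qed
  have TcI: "d2 F eps m I q = 0" if "q \<in> A" for q
    using assms(3) that unfolding T_condition_def I_def by blast
  have d2F0: "F q = 0 \<Longrightarrow> d2 F eps m f q = 0" for q f by (simp add: d2_def)
  have partA: "T_condition_cc A F eps m \<phi>" if hyp: "\<exists>h :: real^2 \<Rightarrow> real. \<forall>p\<in>A. d2 F eps m \<phi> p = h (fst p)"
  proof -
    obtain h0 :: "real^2 \<Rightarrow> real" where h0: "\<And>p. p \<in> A \<Longrightarrow> H p = h0 (fst p)"
      using hyp unfolding H_def by blast
    have vH: "vd H q v = 0" if "q \<in> A" for q v
      by (rule vert_const[OF A_open that Hd[OF that] h0])
    have d2H: "d2 F eps m H q = 0" if "q \<in> A" for q
      using vH[OF that] by (simp add: d2_def)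
    have rho_eq: "eps * rho_cc F eps m \<phi> q = eps / (eps * fst (I q, H q) * snd (I q, H q) + (snd (I q, H q))^2 + eps)"
      if "q \<in> A" for q
    proof -
      have "sigma_cc F eps m \<phi> q = eps * I q * H q + 2 * (H q)^2"
        using d2H[OF that] unfolding sigma_cc_def H_def I_def by simp
      then show ?thesis unfolding rho_cc_def H_def[symmetric] by (simp add: power2_eq_square)
    qed
    define D where "D = (\<lambda>z::real\<times>real. eps * fst z * snd z + (snd z)^2 + eps)"
    have Dd: "D differentiable (at z0)" for z0
      unfolding D_def by (intro differentiable_add differentiable_mult differentiable_power differentiable_const fst_d snd_d)
    have posD: "eps / D (I q, H q) > 0" if "q \<in> A" for q
      using rho_pos[OF that] rho_eq[OF that] unfolding D_def by simp
    then have nzD: "D (I q, H q) \<noteq> 0" if "q \<in> A" for q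
      using that by fastforce
    have fD: "(\<lambda>z. eps / D z) differentiable (at (I q, H q))" if "q \<in> A" for q
      by (intro differentiable_divide differentiable_const Dd nzD[OF that])
    have lnz: "d2 F eps m (\<lambda>q. ln (eps * rho_cc F eps m \<phi> q)) q = 0" if q: "q \<in> A" for q
    proof (cases "F q = 0")
      case True then show ?thesis by (rule d2F0)
    next
      case False
      have K: "(\<lambda>z. ln (eps / D z)) differentiable (at (I q, H q))"
        by (rule ln_differentiable[OF fD[OF q] posD[OF q]])
      have "(\<lambda>q. ln (eps * rho_cc F eps m \<phi> q)) differentiable (at q) \<and>
          frechet_derivative (\<lambda>q. ln (eps * rho_cc F eps m \<phi> q)) (at q) (0, mup F m q) = 0"
      proof (rule dir_zero[OF A_open q Id[OF q] Hd[OF q] _ _ K])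
        show "frechet_derivative I (at q) (0, mup F m q) = 0" using Tc[OF q False] by (simp add: vd_def)
        show "frechet_derivative H (at q) (0, mup F m q) = 0" using vH[OF q] by (simp add: vd_def)
        fix q' assume "q' \<in> A"
        then show "ln (eps * rho_cc F eps m \<phi> q') = ln (eps / D (I q', H q'))"
          using rho_eq unfolding D_def by simp
      qed
      then show ?thesis by (simp add: d2_def vd_def)
    qed
    show ?thesis unfolding T_condition_cc_def
    proof
      fix p assume p: "p \<in> A"
      show "d2 F eps m (main_scalar_cc F eps m \<phi>) p = 0"
      proof (cases "F p = 0")
        case True then show ?thesis by (rule d2F0)
      next
        case False
        define K2 where "K2 = (\<lambda>z::real\<times>real. sqrt (eps / D z) * (fst z + 2 * eps * snd z))"
        have K: "K2 differentiable (at (I p, H p))"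
          unfolding K2_def
          by (intro differentiable_mult differentiable_add differentiable_const fst_d snd_d
              sqrt_differentiable[OF fD[OF p] posD[OF p]])
        have "main_scalar_cc F eps m \<phi> differentiable (at p) \<and>
          frechet_derivative (main_scalar_cc F eps m \<phi>) (at p) (0, mup F m p) = 0"
        proof (rule dir_zero[OF A_open p Id[OF p] Hd[OF p] _ _ K])
          show "frechet_derivative I (at p) (0, mup F m p) = 0" using Tc[OF p False] by (simp add: vd_def)
          show "frechet_derivative H (at p) (0, mup F m p) = 0" using vH[OF p] by (simp add: vd_def)
          fix q' assume q': "q' \<in> A"
          show "main_scalar_cc F eps m \<phi> q' = K2 (I q', H q')"
            unfolding main_scalar_cc_def K2_def using lnz[OF q'] rho_eq[OF q']
            by (simp add: D_def I_def H_def)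
        qed
        then show ?thesis by (simp add: d2_def vd_def)
      qed
    qed
  qed
  have partB: "T_condition_cc A F eps m \<phi> \<longleftrightarrow> (\<forall>p\<in>A. d2 F eps m (d2 F eps m \<phi>) p = 0)"
    if hyp: "\<forall>p\<in>A. sigma_cc F eps m \<phi> p = (d2 F eps m \<phi> p)\<^sup>2"
  proof -
    have er: "eps * rho_cc F eps m \<phi> q = 1" if "q \<in> A" for q
      using hyp that eps_nz unfolding rho_cc_def by simp
    have lnz: "d2 F eps m (\<lambda>q. ln (eps * rho_cc F eps m \<phi> q)) q = 0" if q: "q \<in> A" for q
    proof -
      have "frechet_derivative (\<lambda>q. ln (eps * rho_cc F eps m \<phi> q)) (at q) = frechet_derivative (\<lambda>q. 0::real) (at q)"
        using fd_local[OF A_open q differentiable_const, of "\<lambda>q. ln (eps * rho_cc F eps m \<phi> q)" 0] er by simp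
      then show ?thesis by (simp add: d2_def vd_def)
    qed
    have key: "d2 F eps m (main_scalar_cc F eps m \<phi>) p = 2 * eps * d2 F eps m H p" if p: "p \<in> A" for p
    proof -
      have "main_scalar_cc F eps m \<phi> q = 1 * I q + (2 * eps) * H q" if "q \<in> A" for q
        using er[OF that] lnz[OF that] unfolding main_scalar_cc_def I_def H_def by simp
      from fd_lc[OF A_open p Id[OF p] Hd[OF p] this, of "(0, mup F m p)"]
      have "vd (main_scalar_cc F eps m \<phi>) p (mup F m p) = vd I p (mup F m p) + 2 * eps * vd H p (mup F m p)"
        by (simp add: vd_def)
      then have "d2 F eps m (main_scalar_cc F eps m \<phi>) p = d2 F eps m I p + 2 * eps * d2 F eps m H p"
        by (simp add: d2_def algebra_simps)
      then show ?thesis using TcI[OF p] by simp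
    qed
    show ?thesis unfolding T_condition_cc_def using key eps_nz by (simp add: H_def)
  qed
  show ?thesis using partA partB by blast
qed



end
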